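(* Let $p\geqslant1$ and $\varphi,\psi\in\mathfrak M_p$. Then $\varphi=\psi$ is a formal median identity if and only if $\varphi\sim\psi$.
   Context: A median algebra is a set with a ternary operation $m$ satisfying $m(a,a,b)=a$, invariance under permutations of the arguments, and $m(m(a,b,c),b,d)=m(a,b,m(c,b,d))$. Let $\Omega_p=\{\alpha_1,\ldots,\alpha_p\}$ and add two symbols $\langle,\rangle$. The set $\mathfrak M_p$ of formal ternary expressions is the smallest set of finite words over $\Omega_p\cup\{\langle,\rangle\}$ containing each $\alpha_i$ and containing $\langle\varphi_1\varphi_2\varphi_3\rangle$ whenever $\varphi_1,\varphi_2,\varphi_3$ belong to it; each element not in $\Omega_p$ is uniquely of the form $\langle\varphi_1\varphi_2\varphi_3\rangle$. For a set $Y$ with ternary operation $\nu$ and $y_1,\ldots,y_p\in Y$, the realisation $\varphi_Y(y_1,\ldots,y_p)$ is defined inductively by $(\alpha_i)_Y=y_i$ and $\langle\varphi_1\varphi_2\varphi_3\rangle_Y=\nu((\varphi_1)_Y,(\varphi_2)_Y,(\varphi_3)_Y)$. The equation $\varphi=\psi$ is a formal median identity if $\varphi_Y(y_1,\ldots,y_p)=\psi_Y(y_1,\ldots,y_p)$ for every median algebra $(Y,\nu)$ and all $y_i\in Y$. The complexity $\xi$ is defined by $\xi(\alpha_i)=0$ and $\xi(\langle\varphi_1\varphi_2\varphi_3\rangle)=\max_i\xi(\varphi_i)+1$. Elementary transformations are defined inductively on complexity: for $\varphi\in\Omega_p$ the only ones are $\varphi\mapsto\langle\varphi\varphi\psi\rangle$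 ($\psi\in\mathfrak M_p$). For $\varphi$ of complexity $n\geqslant1$: (I) $\varphi\mapsto\langle\varphi\varphi\psi\rangle$ for any $\psi\in\mathfrak M_p$, and if $\varphi=\langle\psi\psi\varphi'\rangle$ then $\varphi\mapsto\psi$; (II) if $\varphi=\langle\varphi_1\varphi_2\varphi_3\rangle$ then $\varphi\mapsto\langle\varphi_{\sigma(1)}\varphi_{\sigma(2)}\varphi_{\sigma(3)}\rangle$ for any permutation $\sigma$; (III) if $\varphi=\langle\langle\varphi_1\varphi_2\varphi_3\rangle\varphi_2\varphi_4\rangle$ then $\varphi\mapsto\langle\varphi_1\varphi_2\langle\varphi_3\varphi_2\varphi_4\rangle\rangle$, and if $\varphi=\langle\varphi_1\varphi_2\langle\varphi_3\varphi_2\varphi_4\rangle\rangle$ then $\varphi\mapsto\langle\langle\varphi_1\varphi_2\varphi_3\rangle\varphi_2\varphi_4\rangle$; (IV) if $\varphi=\langle\varphi_1\varphi_2\varphi_3\rangle$ and $\varphi_1'$ is obtained from $\varphi_1$ by an elementary transformation, then $\varphi\mapsto\langle\varphi_1'\varphi_2\varphi_3\rangle$. $\sim$ denotes the equivalence relation on $\mathfrak M_p$ generated by elementary transformations (transitive closure of the symmetric relation "obtained by one elementary transformation"). *)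

theory Defs
  imports "HOL-Combinatorics.Permutations"
begin

text \<open>The word \<open>\<langle>\<phi>1\<phi>2\<phi>3\<rangle>\<close> is represented by the tree
  \<open>Med \<phi>1 \<phi>2 \<phi>3\<close> (unique readability makes words and trees equivalent);
  the letter \<open>\<alpha>_i\<close> is \<open>Var i\<close>.\<close>
datatype mexpr = Var nat | Med mexpr mexpr mexpr

fun in_M :: "nat \<Rightarrow> mexpr \<Rightarrow> bool" where
  "in_M p (Var i) \<longleftrightarrow> 1 \<le> i \<and> i \<le> p"
| "in_M p (Med a b c) \<longleftrightarrow> in_M p a \<and> in_M p b \<and> in_M p c"

fun xi :: "mexpr \<Rightarrow> nat" where
  "xi (Var i) = 0"
| "xi (Med a b c) = max (xi a) (max (xi b) (xi c)) + 1"

definition median_algebra :: "'a set \<Rightarrow> ('a \<Rightarrow> 'a \<Rightarrow> 'a \<Rightarrow> 'a) \<Rightarrow> bool" where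
  "median_algebra Y m \<longleftrightarrow>
     (\<forall>a\<in>Y. \<forall>b\<in>Y. \<forall>c\<in>Y. m a b c \<in> Y) \<and>
     (\<forall>a\<in>Y. \<forall>b\<in>Y. m a a b = a) \<and>
     (\<forall>a\<in>Y. \<forall>b\<in>Y. \<forall>c\<in>Y. \<forall>\<sigma>. \<sigma> permutes {0::nat,1,2} \<longrightarrow>
        (let xs = [a,b,c] in m (xs ! \<sigma> 0) (xs ! \<sigma> 1) (xs ! \<sigma> 2)) = m a b c) \<and>
     (\<forall>a\<in>Y. \<forall>b\<in>Y. \<forall>c\<in>Y. \<forall>d\<in>Y. m (m a b c) b d = m a b (m c b d))"

fun realise :: "('a \<Rightarrow> 'a \<Rightarrow> 'a \<Rightarrow> 'a) \<Rightarrow> (nat \<Rightarrow> 'a) \<Rightarrow> mexpr \<Rightarrow> 'a" where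
  "realise m ys (Var i) = ys i"
| "realise m ys (Med a b c) = m (realise m ys a) (realise m ys b) (realise m ys c)"

text \<open>Formal median identity, relative to median algebras whose carrier lives in type \<open>'a\<close>.\<close>
definition formal_median_identity :: "'a itself \<Rightarrow> nat \<Rightarrow> mexpr \<Rightarrow> mexpr \<Rightarrow> bool" where
  "formal_median_identity _ p \<phi> \<psi> \<longleftrightarrow>
     (\<forall>(Y::'a set) m ys. median_algebra Y m \<and> (\<forall>i\<in>{1..p}. ys i \<in> Y) \<longrightarrow>
        realise m ys \<phi> = realise m ys \<psi>)"

inductive elem :: "nat \<Rightarrow> mexpr \<Rightarrow> mexpr \<Rightarrow> bool" for p where
  I_up: "in_M p \<psi> \<Longrightarrow> elem p \<phi> (Med \<phi> \<phi> \<psi>)"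
| I_down: "elem p (Med \<psi> \<psi> \<phi>') \<psi>"
| II: "\<sigma> permutes {0::nat,1,2} \<Longrightarrow>
     elem p (Med a b c) (let xs = [a,b,c] in Med (xs ! \<sigma> 0) (xs ! \<sigma> 1) (xs ! \<sigma> 2))"
| III_1: "elem p (Med (Med a1 a2 a3) a2 a4) (Med a1 a2 (Med a3 a2 a4))"
| III_2: "elem p (Med a1 a2 (Med a3 a2 a4)) (Med (Med a1 a2 a3) a2 a4)"
| IV: "elem p a a' \<Longrightarrow> elem p (Med a b c) (Med a' b c)"

definition msim :: "nat \<Rightarrow> mexpr \<Rightarrow> mexpr \<Rightarrow> bool" where
  "msim p = (\<lambda>x y. elem p x y \<or> elem p y x)\<^sup>*\<^sup>*"

end

theory Submission
  imports Defs "HOL-Library.Countable"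
begin

instance mexpr :: countable by countable_datatype

lemma elem_swap01: "elem p (Med a b c) (Med b a c)"
proof -
  have "transpose (0::nat) 1 permutes {0,1,2}" by (rule permutes_swap_id) auto
  from II[OF this, of p a b c] show ?thesis by (simp add: transpose_def)
qed

lemma elem_swap02: "elem p (Med a b c) (Med c b a)"
proof -
  have "transpose (0::nat) 2 permutes {0,1,2}" by (rule permutes_swap_id) auto
  from II[OF this, of p a b c] show ?thesis by (simp add: transpose_def)
qed

lemma msim_refl: "msim p x x" by (simp add: msim_def)

lemma msim_step: "elem p x y \<Longrightarrow> msim p x y"
  unfolding msim_def by (rule r_into_rtranclp) simp

lemma msim_step': "elem p y x \<Longrightarrow> msim p x y"
  unfolding msim_def by (rule r_into_rtranclp) simp

lemma msim_trans: "msim p x y \<Longrightarrow> msim p y z \<Longrightarrow> msim p x z"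
  unfolding msim_def by (rule rtranclp_trans)

lemma msim_sym: "msim p x y \<Longrightarrow> msim p y x"
  unfolding msim_def
proof (induction rule: rtranclp_induct)
  case base then show ?case by simp
next
  case (step y z)
  then have "elem p z y \<or> elem p y z" by blast
  then show ?case using step(3) by (rule converse_rtranclp_into_rtranclp[where r="\<lambda>x y. elem p x y \<or> elem p y x"])
qed

lemma msim_cong1: "msim p a a' \<Longrightarrow> msim p (Med a b c) (Med a' b c)"
  unfolding msim_def
proof (induction rule: rtranclp_induct)
  case base then show ?case by simp
next
  case (step y z)
  then have "elem p (Med y b c) (Med z b c) \<or> elem p (Med z b c) (Med y b c)" by (blast intro: IV)
  with step(3) show ?case by (rule rtranclp.rtrancl_into_rtrancl[where r="\<lambda>x y. elem p x y \<or> elem p y x"])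
qed

lemma msim_cong2: "msim p b b' \<Longrightarrow> msim p (Med a b c) (Med a b' c)"
proof -
  assume "msim p b b'"
  have "msim p (Med a b c) (Med b a c)" by (rule msim_step[OF elem_swap01])
  moreover have "msim p (Med b a c) (Med b' a c)" by (rule msim_cong1) fact
  moreover have "msim p (Med b' a c) (Med a b' c)" by (rule msim_step[OF elem_swap01])
  ultimately show ?thesis by (meson msim_trans)
qed

lemma msim_cong3: "msim p c c' \<Longrightarrow> msim p (Med a b c) (Med a b c')"
proof -
  assume "msim p c c'"
  have "msim p (Med a b c) (Med c b a)" by (rule msim_step[OF elem_swap02])
  moreover have "msim p (Med c b a) (Med c' b a)" by (rule msim_cong1) fact
  moreover have "msim p (Med c' b a) (Med a b c')" by (rule msim_step[OF elem_swap02])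
  ultimately show ?thesis by (meson msim_trans)
qed

lemma msim_cong: "msim p a a' \<Longrightarrow> msim p b b' \<Longrightarrow> msim p c c' \<Longrightarrow>
   msim p (Med a b c) (Med a' b' c')"
  by (meson msim_cong1 msim_cong2 msim_cong3 msim_trans)

lemma ma_parts:
  assumes "median_algebra Y m"
  shows "\<forall>a\<in>Y. \<forall>b\<in>Y. \<forall>c\<in>Y. m a b c \<in> Y"
    and "\<forall>a\<in>Y. \<forall>b\<in>Y. m a a b = a"
    and "\<forall>a\<in>Y. \<forall>b\<in>Y. \<forall>c\<in>Y. \<forall>\<sigma>. \<sigma> permutes {0::nat,1,2} \<longrightarrow>
        (let xs = [a,b,c] in m (xs ! \<sigma> 0) (xs ! \<sigma> 1) (xs ! \<sigma> 2)) = m a b c"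
    and "\<forall>a\<in>Y. \<forall>b\<in>Y. \<forall>c\<in>Y. \<forall>d\<in>Y. m (m a b c) b d = m a b (m c b d)"
  using assms[unfolded median_algebra_def]
  by (fact conjunct1, fact conjunct2[THEN conjunct1], fact conjunct2[THEN conjunct2, THEN conjunct1],
      fact conjunct2[THEN conjunct2, THEN conjunct2])

lemma ma_closed: "median_algebra Y m \<Longrightarrow> a \<in> Y \<Longrightarrow> b \<in> Y \<Longrightarrow> c \<in> Y \<Longrightarrow> m a b c \<in> Y"
  using ma_parts(1) by blast
lemma ma_maj: "median_algebra Y m \<Longrightarrow> a \<in> Y \<Longrightarrow> b \<in> Y \<Longrightarrow> m a a b = a"
  using ma_parts(2) by blast
lemma ma_assoc: "median_algebra Y m \<Longrightarrow> a \<in> Y \<Longrightarrow> b \<in> Y \<Longrightarrow> c \<in> Y \<Longrightarrow> d \<in> Y \<Longrightarrow>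
   m (m a b c) b d = m a b (m c b d)"
  using ma_parts(4) by blast
lemma ma_perm: "median_algebra Y m \<Longrightarrow> a \<in> Y \<Longrightarrow> b \<in> Y \<Longrightarrow> c \<in> Y \<Longrightarrow> \<sigma> permutes {0::nat,1,2} \<Longrightarrow>
   (let xs = [a,b,c] in m (xs ! \<sigma> 0) (xs ! \<sigma> 1) (xs ! \<sigma> 2)) = m a b c"
  using ma_parts(3) by blast

lemma realise_in:
  assumes "median_algebra Y m" "\<forall>i. ys i \<in> Y"
  shows "realise m ys x \<in> Y"
  using assms by (induction x) (auto intro: ma_closed)

lemma elem_sound:
  assumes "elem p x y" "median_algebra Y m" "\<forall>i. ys i \<in> Y"
  shows "realise m ys x = realise m ys y"
  using assms
proof (induction rule: elem.induct)
  case (I_up \<psi> \<phi>)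
  then show ?case using realise_in[OF I_up(2,3)] by (simp add: ma_maj)
next
  case (I_down \<psi> \<phi>')
  then show ?case using realise_in[OF I_down(1,2)] by (simp add: ma_maj)
next
  case (II \<sigma> a b c)
  have ra: "realise m ys a \<in> Y" "realise m ys b \<in> Y" "realise m ys c \<in> Y"
    using realise_in[OF II(2,3)] by auto
  have s: "\<sigma> i \<in> {0,1,2}" if "i \<in> {0::nat,1,2}" for i
    using permutes_in_image[OF II(1)] that by auto
  have e: "realise m ys ([a,b,c] ! \<sigma> i) = [realise m ys a, realise m ys b, realise m ys c] ! \<sigma> i"
    if "i \<in> {0::nat,1,2}" for i
    using s[OF that] by auto
  have "realise m ys (let xs = [a,b,c] in Med (xs ! \<sigma> 0) (xs ! \<sigma> 1) (xs ! \<sigma> 2))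
     = (let xs = [realise m ys a, realise m ys b, realise m ys c] in m (xs ! \<sigma> 0) (xs ! \<sigma> 1) (xs ! \<sigma> 2))"
    using e[of 0] e[of 1] e[of 2] by (simp add: Let_def)
  also have "\<dots> = m (realise m ys a) (realise m ys b) (realise m ys c)"
    using ma_perm[OF II(2) ra II(1)] .
  finally show ?case by simp
next
  case (III_1 a1 a2 a3 a4)
  then show ?case using realise_in[OF III_1(1,2)] by (simp add: ma_assoc)
next
  case (III_2 a1 a2 a3 a4)
  then show ?case using realise_in[OF III_2(1,2)] by (simp add: ma_assoc)
next
  case (IV a a' b c)
  then show ?case by simp
qed

lemma msim_sound:
  assumes "msim p x y" "median_algebra Y m" "\<forall>i. ys i \<in> Y"
  shows "realise m ys x = realise m ys y"
  using assms(1) unfolding msim_def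
proof (induction rule: rtranclp_induct)
  case base then show ?case by simp
next
  case (step y z)
  then show ?case using elem_sound[OF _ assms(2,3)] by metis
qed

lemma realise_inM:
  assumes "in_M p x" "\<forall>i\<in>{1..p}. ys' i = ys i"
  shows "realise m ys' x = realise m ys x"
  using assms by (induction x) auto

lemma soundness:
  assumes "p \<ge> 1" "in_M p \<phi>" "in_M p \<psi>" "msim p \<phi> \<psi>"
  shows "formal_median_identity TYPE('a) p \<phi> \<psi>"
  unfolding formal_median_identity_def
proof (intro allI impI)
  fix Y :: "'a set" and m ys
  assume h: "median_algebra Y m \<and> (\<forall>i\<in>{1..p}. ys i \<in> Y)"
  define ys' where "ys' i = (if i \<in> {1..p} then ys i else ys 1)" for i
  have "\<forall>i. ys' i \<in> Y" using h assms(1) by (auto simp: ys'_def)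
  then have "realise m ys' \<phi> = realise m ys' \<psi>" using msim_sound assms(4) h by blast
  moreover have "\<forall>i\<in>{1..p}. ys' i = ys i" by (simp add: ys'_def)
  ultimately show "realise m ys \<phi> = realise m ys \<psi>"
    using realise_inM assms(2,3) by metis
qed

definition rep :: "nat \<Rightarrow> mexpr \<Rightarrow> mexpr" where
  "rep p x = (SOME y. msim p x y)"

lemma rep_msim: "msim p x (rep p x)"
  unfolding rep_def by (rule someI[of _ x]) (rule msim_refl)

lemma rep_eq: "msim p x y \<Longrightarrow> rep p x = rep p y"
proof -
  assume "msim p x y"
  then have "msim p x = msim p y"
    by (intro ext) (meson msim_sym msim_trans)
  then show ?thesis by (simp add: rep_def)
qed

lemma rep_eq_iff: "rep p x = rep p y \<longleftrightarrow> msim p x y"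
  by (metis rep_eq rep_msim msim_sym msim_trans)

definition code :: "nat \<Rightarrow> mexpr \<Rightarrow> nat" where
  "code p x = to_nat (rep p x)"

lemma code_eq_iff: "code p x = code p y \<longleftrightarrow> msim p x y"
  by (simp add: code_def rep_eq_iff)

definition mop :: "nat \<Rightarrow> nat \<Rightarrow> nat \<Rightarrow> nat \<Rightarrow> nat" where
  "mop p u v w = code p (Med (from_nat u) (from_nat v) (from_nat w))"

lemma mop_code: "mop p (code p a) (code p b) (code p c) = code p (Med a b c)"
proof -
  have f: "from_nat (code p x) = rep p x" for x by (simp add: code_def)
  show ?thesis unfolding mop_def f code_eq_iff
    by (meson msim_cong rep_msim msim_sym)
qed

lemma free_median: "median_algebra (range (code p)) (mop p)"
  unfolding median_algebra_def
proof (intro conjI ballI allI impI)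
  fix a b c assume "a \<in> range (code p)" "b \<in> range (code p)" "c \<in> range (code p)"
  then show "mop p a b c \<in> range (code p)" by (auto simp: mop_def)
next
  fix a b assume "a \<in> range (code p)" "b \<in> range (code p)"
  then obtain x y where "a = code p x" "b = code p y" by auto
  then show "mop p a a b = a"
    by (simp add: mop_code code_eq_iff msim_step I_down)
next
  fix a b c :: nat and \<sigma> :: "nat \<Rightarrow> nat"
  assume "a \<in> range (code p)" "b \<in> range (code p)" "c \<in> range (code p)" and sg: "\<sigma> permutes {0,1,2}"
  then obtain x y z where xyz: "a = code p x" "b = code p y" "c = code p z" by auto
  have s: "\<sigma> i \<in> {0,1,2}" if "i \<in> {0::nat,1,2}" for i
    using permutes_in_image[OF sg] that by auto
  have e: "[a,b,c] ! \<sigma> i = code p ([x,y,z] ! \<sigma> i)" if "i \<in> {0::nat,1,2}" for i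
    using s[OF that] xyz by auto
  have "(let xs = [a, b, c] in mop p (xs ! \<sigma> 0) (xs ! \<sigma> 1) (xs ! \<sigma> 2))
     = code p (let xs = [x,y,z] in Med (xs ! \<sigma> 0) (xs ! \<sigma> 1) (xs ! \<sigma> 2))"
    using e[of 0] e[of 1] e[of 2] by (simp add: Let_def mop_code)
  also have "\<dots> = code p (Med x y z)"
    unfolding code_eq_iff by (rule msim_step'[OF II[OF sg]])
  finally show "(let xs = [a, b, c] in mop p (xs ! \<sigma> 0) (xs ! \<sigma> 1) (xs ! \<sigma> 2)) = mop p a b c"
    by (simp add: xyz mop_code)
next
  fix a b c d assume "a \<in> range (code p)" "b \<in> range (code p)" "c \<in> range (code p)" "d \<in> range (code p)"
  then obtain x y z w where "a = code p x" "b = code p y" "c = code p z" "d = code p w" by auto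
  then show "mop p (mop p a b c) b d = mop p a b (mop p c b d)"
    by (simp add: mop_code code_eq_iff msim_step III_1)
qed

lemma realise_code: "realise (mop p) (\<lambda>i. code p (Var i)) x = code p x"
  by (induction x) (simp_all add: mop_code)

lemma completeness:
  assumes "formal_median_identity TYPE(nat) p \<phi> \<psi>"
  shows "msim p \<phi> \<psi>"
proof -
  have "realise (mop p) (\<lambda>i. code p (Var i)) \<phi> = realise (mop p) (\<lambda>i. code p (Var i)) \<psi>"
  proof -
    have "\<forall>i\<in>{1..p}. code p (Var i) \<in> range (code p)" by simp
    with free_median[of p] assms show ?thesis unfolding formal_median_identity_def
      by (elim allE[where x="range (code p)"] allE[where x="mop p"] allE[where x="\<lambda>i. code p (Var i)"]) (erule mp, rule conjI)
  qed
  then show ?thesis by (simp add: realise_code code_eq_iff)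
qed

theorem corollary3p10:
  fixes p :: nat and \<phi> \<psi> :: mexpr
  assumes "p \<ge> 1" and "in_M p \<phi>" and "in_M p \<psi>"
  shows "(formal_median_identity TYPE(nat) p \<phi> \<psi> \<longleftrightarrow> msim p \<phi> \<psi>)
       \<and> (msim p \<phi> \<psi> \<longrightarrow> formal_median_identity TYPE('a) p \<phi> \<psi>)"
proof (intro conjI iffI impI)
  show "formal_median_identity TYPE(nat) p \<phi> \<psi> \<Longrightarrow> msim p \<phi> \<psi>" by (rule completeness)
  show "msim p \<phi> \<psi> \<Longrightarrow> formal_median_identity TYPE(nat) p \<phi> \<psi>" by (rule soundness[OF assms])
  show "msim p \<phi> \<psi> \<Longrightarrow> formal_median_identity TYPE('a) p \<phi> \<psi>" by (rule soundness[OF assms])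
qed

end
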